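(* Let $\mathcal{M},\mathcal{N}\in\mathbb{N}$ and let $\boldsymbol{L}\in\mathbb{R}^{\mathcal{M}\times\mathcal{N}}$ be such that, for each $i=1,\dots,\mathcal{M}$, the entries $L_{i1},\dots,L_{i\mathcal{N}}$ together with $1$ are linearly independent over $\mathbb{Q}$. Let $\varepsilon,T>0$ and $\boldsymbol{Q}\in[1,+\infty)^{\mathcal{N}}$. Then for each $i=1,\dots,\mathcal{M}$, $$\#\big(\Lambda_{\boldsymbol{L}}\cap Z^i\big)\ll_{\mathcal{M}}(1+T)^{\mathcal{M}},$$ with implied constant depending only on $\mathcal{M}$.
   Context: $\Lambda_{\boldsymbol{L}}:=\{(L_1\boldsymbol{q}+p_1,\dots,L_{\mathcal{M}}\boldsymbol{q}+p_{\mathcal{M}},\boldsymbol{q}):\boldsymbol{p}\in\mathbb{Z}^{\mathcal{M}},\boldsymbol{q}\in\mathbb{Z}^{\mathcal{N}}\}\subset\mathbb{R}^{\mathcal{M}+\mathcal{N}}$, where $L_i\boldsymbol{q}=\sum_jL_{ij}q_j$. Let $H:=\{\boldsymbol{x}\in\mathbb{R}^{\mathcal{M}}:\prod_{i=1}^{\mathcal{M}}|x_i|<\varepsilon,\ |x_i|\le T\ (i=1,\dots,\mathcal{M})\}$, $H^i:=H\cap\{x_i=0\}$, and $Z^i:=H^i\times\prod_{j=1}^{\mathcal{N}}[-Q_j,Q_j]$. *)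

theory Defs
  imports Complex_Main
begin

(* Points of R^(M+N) are modelled as functions x :: nat => real, coordinates
   x 1, ..., x (M+N) (1-based as in the paper), all other values are 0.
   Coordinate k in {1..M} is the x-part, coordinate M+j (j in {1..N}) is q_j. *)

definition row_Q_indep :: "nat \<Rightarrow> (nat \<Rightarrow> nat \<Rightarrow> real) \<Rightarrow> nat \<Rightarrow> bool" where
  "row_Q_indep N L i \<longleftrightarrow>
     (\<forall>(r0::rat) (r::nat \<Rightarrow> rat).
        of_rat r0 + (\<Sum>j=1..N. of_rat (r j) * L i j) = 0 \<longrightarrow>
        r0 = 0 \<and> (\<forall>j\<in>{1..N}. r j = 0))"

definition Lambda_L :: "nat \<Rightarrow> nat \<Rightarrow> (nat \<Rightarrow> nat \<Rightarrow> real) \<Rightarrow> (nat \<Rightarrow> real) set" where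
  "Lambda_L M N L = {x. \<exists>(p::nat \<Rightarrow> int) (q::nat \<Rightarrow> int).
      (\<forall>k\<in>{1..M}. x k = (\<Sum>j=1..N. L k j * of_int (q j)) + of_int (p k)) \<and>
      (\<forall>j\<in>{1..N}. x (M + j) = of_int (q j)) \<and>
      (\<forall>k. k \<notin> {1..M+N} \<longrightarrow> x k = 0)}"

definition Z_set :: "nat \<Rightarrow> nat \<Rightarrow> real \<Rightarrow> real \<Rightarrow> (nat \<Rightarrow> real) \<Rightarrow> nat \<Rightarrow> (nat \<Rightarrow> real) set" where
  "Z_set M N \<epsilon> T Q i = {x.
      (\<Prod>k=1..M. \<bar>x k\<bar>) < \<epsilon> \<and> (\<forall>k\<in>{1..M}. \<bar>x k\<bar> \<le> T) \<and> x i = 0 \<and>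
      (\<forall>j\<in>{1..N}. \<bar>x (M + j)\<bar> \<le> Q j) \<and>
      (\<forall>k. k \<notin> {1..M+N} \<longrightarrow> x k = 0)}"

end

theory Submission
  imports Defs "HOL-Library.FuncSet"
begin

lemma key:
  assumes "x \<in> Lambda_L M N L \<inter> Z_set M N \<epsilon> T Q i" "i \<in> {1..M}" "row_Q_indep N L i"
  shows "\<exists>p::nat\<Rightarrow>int. (\<forall>k\<in>{1..M}. x k = of_int (p k) \<and> p k \<in> {-\<lfloor>T\<rfloor>..\<lfloor>T\<rfloor>}) \<and> (\<forall>k. k \<notin> {1..M} \<longrightarrow> x k = 0)"
proof -
  obtain p q where pq: "\<forall>k\<in>{1..M}. x k = (\<Sum>j=1..N. L k j * of_int (q j)) + of_int (p k)"
    "\<forall>j\<in>{1..N}. x (M + j) = of_int (q j)" "\<forall>k. k \<notin> {1..M+N} \<longrightarrow> x k = 0"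
    using assms(1) unfolding Lambda_L_def by blast
  have Z: "\<forall>k\<in>{1..M}. \<bar>x k\<bar> \<le> T" "x i = 0"
    using assms(1) unfolding Z_set_def by auto
  have "of_rat (of_int (p i)) + (\<Sum>j=1..N. of_rat (of_int (q j)) * L i j) = (0::real)"
    using pq(1) assms(2) Z(2) by (simp add: of_rat_of_int_eq mult.commute add.commute)
  hence q0: "\<forall>j\<in>{1..N}. q j = 0"
    using assms(3) unfolding row_Q_indep_def by fastforce
  have xk: "\<forall>k\<in>{1..M}. x k = of_int (p k)"
    using pq(1) q0 by simp
  show ?thesis
  proof (intro exI conjI ballI allI impI)
    fix k assume k: "k \<in> {1..M}"
    show "x k = of_int (p k)" using xk k by blast
    have "\<bar>of_int (p k)\<bar> \<le> T" using Z(1) xk k by fastforce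
    hence "of_int (p k) \<le> T" "- T \<le> of_int (p k)" by linarith+
    thus "p k \<in> {-\<lfloor>T\<rfloor>..\<lfloor>T\<rfloor>}"
      by (simp add: le_floor_iff) (metis ceiling_le_iff ceiling_minus minus_le_iff)
  next
    fix k assume k: "k \<notin> {1..M}"
    show "x k = 0"
    proof (cases "k \<in> {1..M+N}")
      case True
      then have "k - M \<in> {1..N}" "M + (k - M) = k" using k by auto
      then show ?thesis using pq(2) q0 by (metis of_int_0)
    qed (use pq(3) in auto)
  qed
qed

theorem lemma2p2:
  fixes M :: nat
  shows "\<exists>C>0. \<forall>(N::nat) (L::nat \<Rightarrow> nat \<Rightarrow> real) (\<epsilon>::real) (T::real) (Q::nat \<Rightarrow> real) (i::nat).
     (\<forall>i'\<in>{1..M}. row_Q_indep N L i') \<longrightarrow> \<epsilon> > 0 \<longrightarrow> T > 0 \<longrightarrow>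
     (\<forall>j\<in>{1..N}. Q j \<ge> 1) \<longrightarrow> i \<in> {1..M} \<longrightarrow>
     finite (Lambda_L M N L \<inter> Z_set M N \<epsilon> T Q i) \<and>
     real (card (Lambda_L M N L \<inter> Z_set M N \<epsilon> T Q i)) \<le> C * (1 + T) ^ M"
proof (intro exI[of _ "2 ^ M"] conjI allI impI)
  show "(0::real) < 2 ^ M" by simp
  fix N L \<epsilon> T Q i
  assume A: "\<forall>i'\<in>{1..M}. row_Q_indep N L i'" "(0::real) < T" "i \<in> {1..M}"
  define f where "f = (\<lambda>(p::nat\<Rightarrow>int) k. if k \<in> {1..M} then (of_int (p k)::real) else 0)"
  define PS where "PS = PiE {1..M} (\<lambda>_. {-\<lfloor>T\<rfloor>..\<lfloor>T\<rfloor>})"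
  have fin: "finite PS" unfolding PS_def by (simp add: finite_PiE)
  have sub: "Lambda_L M N L \<inter> Z_set M N \<epsilon> T Q i \<subseteq> f ` PS"
  proof
    fix x assume x: "x \<in> Lambda_L M N L \<inter> Z_set M N \<epsilon> T Q i"
    obtain p where p: "\<forall>k\<in>{1..M}. x k = of_int (p k) \<and> p k \<in> {-\<lfloor>T\<rfloor>..\<lfloor>T\<rfloor>}"
        "\<forall>k. k \<notin> {1..M} \<longrightarrow> x k = 0"
      using key[OF x A(3)] A(1) A(3) by blast
    have "restrict p {1..M} \<in> PS" unfolding PS_def using p(1) by auto
    moreover have "x = f (restrict p {1..M})" unfolding f_def using p by auto
    ultimately show "x \<in> f ` PS" by blast
  qed
  show "finite (Lambda_L M N L \<inter> Z_set M N \<epsilon> T Q i)"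
    using sub fin finite_subset by blast
  have "card (Lambda_L M N L \<inter> Z_set M N \<epsilon> T Q i) \<le> card PS"
    by (meson card_image_le card_mono fin finite_imageI order_trans sub)
  also have "card PS = nat (2 * \<lfloor>T\<rfloor> + 1) ^ M" unfolding PS_def
    by (simp add: card_PiE)
  finally have "real (card (Lambda_L M N L \<inter> Z_set M N \<epsilon> T Q i)) \<le> real (nat (2 * \<lfloor>T\<rfloor> + 1) ^ M)"
    by linarith
  also have "\<dots> = (2 * of_int \<lfloor>T\<rfloor> + 1) ^ M" using A(2) by simp
  also have "\<dots> \<le> (2 * (1 + T)) ^ M"
  proof (rule power_mono)
    have "0 \<le> \<lfloor>T\<rfloor>" using A(2) by simp
    then show "0 \<le> 2 * real_of_int \<lfloor>T\<rfloor> + 1" by simp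
    show "2 * real_of_int \<lfloor>T\<rfloor> + 1 \<le> 2 * (1 + T)" using of_int_floor_le[of T] A(2) by argo
  qed
  also have "\<dots> = 2 ^ M * (1 + T) ^ M" by (simp only: power_mult_distrib)
  finally show "real (card (Lambda_L M N L \<inter> Z_set M N \<epsilon> T Q i)) \<le> 2 ^ M * (1 + T) ^ M" .
qed

end
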